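(* Let A be a rate and window assignment algorithm for the multi-rate fluid model which, for any task system $\tau$ and number of processors $m$, is guaranteed to return some assignment satisfying (S1)–(S5) whenever there exists at least one assignment such that $\theta_{i,j}^H=\theta_i^H$ for all $\tau_i\in\tau_H$ and all $1\le j\le n_H$, $w_j=0$ for all $1\le j\le n_H$, and (S1)–(S5) hold. Then A dominates MC-Fluid (every task system schedulable under MC-Fluid on $m$ processors is schedulable under A on $m$ processors), and A has a speed-up bound of $4/3$.
   Context: Dual-criticality implicit-deadline sporadic task system $\tau$ on $m$ identical processors; each task $\tau_i$ has period/deadline $T_i>0$, criticality in $\{LO,HI\}$, WCETs $C_i^L\le C_i^H$ ($=$ for LO-tasks), $u_i^L=C_i^L/T_i\le1$, $u_i^H=C_i^H/T_i\le1$; $\tau_H$ the HI-tasks, $n_H=|\tau_H|$. A multi-rate assignment consists of LO-mode rates $\theta_i^L\in(0,1]$ ($\tau_i\in\tau$), transition rates $\theta_{i,j}^H\in[0,1]$ and HI rates $\theta_i^H\in(0,1]$ ($\tau_i\in\tau_H$, $1\le j\le n_H$), and window durations $w_j\ge0$. The earliest completion window of $\tau_i\in\tau_H$ is the largest $k_i\in\{1,\dots,n_H+1\}$ with $\sum_{j<k_i}w_j<T_i-C_i^L/\theta_i^L$; $R_i=\theta_{i,k_i}^H$ if $k_i\le n_H$, else $\theta_i^H$; $\theta_{i,n_H+1}^H:=\theta_i^H$. Conditions: (S1) $\theta_i^L\ge u_i^L$ for all $\tau_i\in\tau$; (S2) $\sum_{\tau}\theta_i^L\le m$; (S3) $\sum_{\tau_H}\theta_{i,j}^H\le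 m$ for all $j$ and $\sum_{\tau_H}\theta_i^H\le m$; (S4) for all $\tau_i\in\tau_H$: $\sum_{j<k_i}\theta_{i,j}^Hw_j+R_i(T_i-C_i^L/\theta_i^L-\sum_{j<k_i}w_j)\ge C_i^H-C_i^L$, $\theta_i^L\le\theta_{i,j}^H$ for $k_i\le j\le n_H$, $\theta_i^L\le\theta_i^H$; (S5) for all $\tau_i\in\tau_H$: $\sum_{j<k_i}\theta_{i,j}^Hw_j\ge u_i^H\sum_{j<k_i}w_j$, $\theta_{i,j}^H\le\theta_{i,j+1}^H$ for $1\le j<k_i$, $\theta_{i,j}^H\ge u_i^H$ for $k_i\le j\le n_H$, $\theta_i^H\ge u_i^H$. A task system is schedulable under A if A returns an assignment satisfying (S1)–(S5). MC-Fluid is the dual-rate fluid rate-assignment algorithm of Lee et al.; a task system is schedulable under MC-Fluid exactly when MC-Fluid returns rates $\theta_i^L$ ($\tau_i\in\tau$), $\theta_i^H$ ($\tau_i\in\tau_H$) satisfying: $\theta_i^L\ge u_i^L$ for all $\tau_i\in\tau$; $u_i^L/\theta_i^L+(u_i^H-u_i^L)/\theta_i^H\le1$ and $\theta_i^H\ge\theta_i^L$ for all $\tau_i\in\tau_H$; $\sum_{\tau}\theta_i^L\le m$; $\sum_{\tau_H}\theta_i^H\le m$. It is known from prior work that MC-Fluid has speed-up bound $4/3$. An algorithm has speed-up bound $s$ if every task system that is MC-schedulable by some algorithm on $m$ unit-speed processors (every job receives $C_i^L$ by its deadline in LO-mode and every HI-job receives $C_i^H$ by its deadline in HI-mode) is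 deemed schedulable by the algorithm on $m$ processors of speed $s$. *)

theory Defs
  imports Complex_Main
begin

record task =
  per :: real        (* period = deadline T_i *)
  CL  :: real
  CH  :: real
  hi  :: bool        (* criticality: True = HI, False = LO *)

type_synonym taskset = "task list"

definition uL :: "task \<Rightarrow> real" where "uL t = CL t / per t"
definition uH :: "task \<Rightarrow> real" where "uH t = CH t / per t"

definition wf_task :: "task \<Rightarrow> bool" where
  "wf_task t \<longleftrightarrow> per t > 0 \<and> 0 \<le> CL t \<and> CL t \<le> CH t \<and> (\<not> hi t \<longrightarrow> CH t = CL t)
      \<and> uL t \<le> 1 \<and> uH t \<le> 1"

definition wf_taskset :: "taskset \<Rightarrow> bool" where
  "wf_taskset ts \<longleftrightarrow> (\<forall>t\<in>set ts. wf_task t)"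

definition Tall :: "taskset \<Rightarrow> nat set" where "Tall ts = {i. i < length ts}"
definition THI :: "taskset \<Rightarrow> nat set" where "THI ts = {i. i < length ts \<and> hi (ts ! i)}"
definition nH :: "taskset \<Rightarrow> nat" where "nH ts = card (THI ts)"

record mr_assign =
  thL  :: "nat \<Rightarrow> real"
  thHj :: "nat \<Rightarrow> nat \<Rightarrow> real"    (* theta_{i,j}^H, 1 <= j <= n_H *)
  thH  :: "nat \<Rightarrow> real"
  win  :: "nat \<Rightarrow> real"            (* w_j, 1 <= j <= n_H *)

(* theta_{i,j}^H with the convention theta_{i,n_H+1}^H := theta_i^H *)
definition thHx :: "taskset \<Rightarrow> mr_assign \<Rightarrow> nat \<Rightarrow> nat \<Rightarrow> real" where
  "thHx ts a i j = (if j = nH ts + 1 then thH a i else thHj a i j)"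

definition slackL :: "taskset \<Rightarrow> mr_assign \<Rightarrow> nat \<Rightarrow> real" where
  "slackL ts a i = per (ts ! i) - CL (ts ! i) / thL a i"

(* earliest completion window k_i: largest k in {1..n_H+1} with sum_{j<k} w_j < T_i - C_i^L/theta_i^L
   (default 1 if no such k exists) *)
definition kcand :: "taskset \<Rightarrow> mr_assign \<Rightarrow> nat \<Rightarrow> nat \<Rightarrow> bool" where
  "kcand ts a i k \<longleftrightarrow> k \<in> {1..nH ts + 1} \<and> (\<Sum>j\<in>{1..<k}. win a j) < slackL ts a i"

definition kidx :: "taskset \<Rightarrow> mr_assign \<Rightarrow> nat \<Rightarrow> nat" where
  "kidx ts a i = (if \<exists>k. kcand ts a i k then (GREATEST k. kcand ts a i k) else 1)"

definition Rrate :: "taskset \<Rightarrow> mr_assign \<Rightarrow> nat \<Rightarrow> real" where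
  "Rrate ts a i = thHx ts a i (kidx ts a i)"

definition mr_domain :: "taskset \<Rightarrow> mr_assign \<Rightarrow> bool" where
  "mr_domain ts a \<longleftrightarrow>
     (\<forall>i\<in>Tall ts. 0 < thL a i \<and> thL a i \<le> 1) \<and>
     (\<forall>i\<in>THI ts. (\<forall>j\<in>{1..nH ts}. 0 \<le> thHj a i j \<and> thHj a i j \<le> 1)
                  \<and> 0 < thH a i \<and> thH a i \<le> 1) \<and>
     (\<forall>j\<in>{1..nH ts}. 0 \<le> win a j)"

definition S1 :: "taskset \<Rightarrow> mr_assign \<Rightarrow> bool" where
  "S1 ts a \<longleftrightarrow> (\<forall>i\<in>Tall ts. thL a i \<ge> uL (ts ! i))"

definition S2 :: "taskset \<Rightarrow> nat \<Rightarrow> mr_assign \<Rightarrow> bool" where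
  "S2 ts m a \<longleftrightarrow> (\<Sum>i\<in>Tall ts. thL a i) \<le> real m"

definition S3 :: "taskset \<Rightarrow> nat \<Rightarrow> mr_assign \<Rightarrow> bool" where
  "S3 ts m a \<longleftrightarrow> (\<forall>j\<in>{1..nH ts}. (\<Sum>i\<in>THI ts. thHj a i j) \<le> real m)
                  \<and> (\<Sum>i\<in>THI ts. thH a i) \<le> real m"

definition S4 :: "taskset \<Rightarrow> mr_assign \<Rightarrow> bool" where
  "S4 ts a \<longleftrightarrow> (\<forall>i\<in>THI ts.
     (let k = kidx ts a i in
       (\<Sum>j\<in>{1..<k}. thHj a i j * win a j)
         + Rrate ts a i * (slackL ts a i - (\<Sum>j\<in>{1..<k}. win a j))
         \<ge> CH (ts ! i) - CL (ts ! i)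
       \<and> (\<forall>j\<in>{k..nH ts}. thL a i \<le> thHj a i j)
       \<and> thL a i \<le> thH a i))"

definition S5 :: "taskset \<Rightarrow> mr_assign \<Rightarrow> bool" where
  "S5 ts a \<longleftrightarrow> (\<forall>i\<in>THI ts.
     (let k = kidx ts a i in
       (\<Sum>j\<in>{1..<k}. thHj a i j * win a j) \<ge> uH (ts ! i) * (\<Sum>j\<in>{1..<k}. win a j)
       \<and> (\<forall>j\<in>{1..<k}. thHx ts a i j \<le> thHx ts a i (j + 1))
       \<and> (\<forall>j\<in>{k..nH ts}. thHj a i j \<ge> uH (ts ! i))
       \<and> thH a i \<ge> uH (ts ! i)))"

definition mr_valid :: "taskset \<Rightarrow> nat \<Rightarrow> mr_assign \<Rightarrow> bool" where
  "mr_valid ts m a \<longleftrightarrow> mr_domain ts a \<and> S1 ts a \<and> S2 ts m a \<and> S3 ts m a \<and> S4 ts a \<and> S5 ts a"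

definition dual_rate_form :: "taskset \<Rightarrow> mr_assign \<Rightarrow> bool" where
  "dual_rate_form ts a \<longleftrightarrow>
     (\<forall>i\<in>THI ts. \<forall>j\<in>{1..nH ts}. thHj a i j = thH a i) \<and> (\<forall>j\<in>{1..nH ts}. win a j = 0)"

type_synonym mr_algorithm = "taskset \<Rightarrow> nat \<Rightarrow> mr_assign option"

definition mr_sched :: "mr_algorithm \<Rightarrow> taskset \<Rightarrow> nat \<Rightarrow> bool" where
  "mr_sched A ts m \<longleftrightarrow> (\<exists>a. A ts m = Some a \<and> mr_valid ts m a)"

(* MC-Fluid returns LO rates and HI rates *)
type_synonym fluid_algorithm = "taskset \<Rightarrow> nat \<Rightarrow> ((nat \<Rightarrow> real) \<times> (nat \<Rightarrow> real)) option"

definition mcf_valid :: "taskset \<Rightarrow> nat \<Rightarrow> (nat \<Rightarrow> real) \<Rightarrow> (nat \<Rightarrow> real) \<Rightarrow> bool" where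
  "mcf_valid ts m rL rH \<longleftrightarrow>
     (\<forall>i\<in>Tall ts. 0 < rL i \<and> rL i \<le> 1 \<and> rL i \<ge> uL (ts ! i)) \<and>
     (\<forall>i\<in>THI ts. 0 < rH i \<and> rH i \<le> 1
        \<and> uL (ts ! i) / rL i + (uH (ts ! i) - uL (ts ! i)) / rH i \<le> 1
        \<and> rH i \<ge> rL i) \<and>
     (\<Sum>i\<in>Tall ts. rL i) \<le> real m \<and>
     (\<Sum>i\<in>THI ts. rH i) \<le> real m"

definition mcf_sched :: "fluid_algorithm \<Rightarrow> taskset \<Rightarrow> nat \<Rightarrow> bool" where
  "mcf_sched F ts m \<longleftrightarrow> (\<exists>rL rH. F ts m = Some (rL, rH) \<and> mcf_valid ts m rL rH)"

(* running on processors of speed s = scaling all WCETs by 1/s *)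
definition scale :: "real \<Rightarrow> taskset \<Rightarrow> taskset" where
  "scale s ts = map (\<lambda>t. t\<lparr>CL := CL t / s, CH := CH t / s\<rparr>) ts"

(* sched has speed-up bound s w.r.t. the MC-feasibility notion Feas
   (Feas ts m: ts is MC-schedulable by some algorithm on m unit-speed processors) *)
definition speedup_bound :: "(taskset \<Rightarrow> nat \<Rightarrow> bool) \<Rightarrow> (taskset \<Rightarrow> nat \<Rightarrow> bool) \<Rightarrow> real \<Rightarrow> bool" where
  "speedup_bound Feas sched s \<longleftrightarrow>
     (\<forall>ts m. wf_taskset ts \<longrightarrow> Feas ts m \<longrightarrow> sched (scale s ts) m)"

end

theory Submission
  imports Defs
begin

lemma key_ineq:
  fixes T cl ch rl rh :: real
  assumes T: "T > 0" and cl: "0 \<le> cl" and rl: "0 < rl" and rh: "0 < rh"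
    and c: "(cl/T)/rl + (ch/T - cl/T)/rh \<le> 1"
  shows "ch - cl \<le> rh * (T - cl / rl)"
proof -
  have "(ch/T - cl/T)/rh \<le> 1 - (cl/T)/rl" using c by linarith
  hence "ch/T - cl/T \<le> rh * (1 - (cl/T)/rl)" using rh by (simp add: divide_le_eq mult.commute)
  hence "T * (ch/T - cl/T) \<le> T * (rh * (1 - (cl/T)/rl))" using T by (simp add: mult_left_mono)
  moreover have "T * (ch/T - cl/T) = ch - cl" using T by (simp add: field_simps)
  moreover have "T * (rh * (1 - (cl/T)/rl)) = rh * (T - cl / rl)" using T rl by (simp add: field_simps)
  ultimately show ?thesis by linarith
qed

lemma key_uH:
  fixes ul uh rl rh :: real
  assumes ul: "0 \<le> ul" and rl: "0 < rl" and rh: "0 < rh" and le: "rl \<le> rh"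
    and c: "ul/rl + (uh - ul)/rh \<le> 1"
  shows "uh \<le> rh"
proof -
  have "(uh - ul)/rh \<le> 1 - ul/rl" using c by linarith
  hence "uh - ul \<le> rh * (1 - ul/rl)" using rh by (simp add: divide_le_eq mult.commute)
  moreover have "rh * (ul/rl) \<ge> ul"
  proof -
    have "rh/rl \<ge> 1" using rl le by simp
    hence "ul * (rh/rl) \<ge> ul * 1" using ul by (intro mult_left_mono) auto
    thus ?thesis by (simp add: field_simps)
  qed
  ultimately show ?thesis by (simp add: algebra_simps)
qed

lemma mcf_to_dual:
  assumes wf: "wf_taskset ts" and v: "mcf_valid ts m rL rH"
  shows "\<exists>a. dual_rate_form ts a \<and> mr_valid ts m a"
proof -
  define a where "a = \<lparr>thL = rL, thHj = (\<lambda>i j. rH i), thH = rH, win = (\<lambda>j. 0::real)\<rparr>"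
  have wfi: "wf_task (ts ! i)" if "i \<in> THI ts" for i
    using that wf unfolding THI_def wf_taskset_def by auto
  have thHx: "thHx ts a i j = rH i" for i j by (simp add: thHx_def a_def)
  have R: "Rrate ts a i = rH i" for i by (simp add: Rrate_def thHx)
  have aw: "win a j = 0" "thHj a i j = rH i" "thL a = rL" "thH a = rH" for i j by (simp_all add: a_def)
  have dom: "mr_domain ts a" using v unfolding mr_domain_def mcf_valid_def a_def by auto
  have s1: "S1 ts a" using v unfolding S1_def mcf_valid_def a_def by auto
  have s2: "S2 ts m a" using v unfolding S2_def mcf_valid_def a_def by auto
  have s3: "S3 ts m a" using v unfolding S3_def mcf_valid_def a_def by auto
  have s4: "S4 ts a"
    unfolding S4_def Let_def
  proof
    fix i assume i: "i \<in> THI ts"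
    have w: "wf_task (ts ! i)" using wfi[OF i] .
    have iT: "i \<in> Tall ts" using i by (simp add: THI_def Tall_def)
    have vi: "0 < rH i" "rH i \<ge> rL i"
      "uL (ts ! i) / rL i + (uH (ts ! i) - uL (ts ! i)) / rH i \<le> 1" "0 < rL i"
      using v i iT unfolding mcf_valid_def by auto
    have "CH (ts ! i) - CL (ts ! i) \<le> rH i * slackL ts a i"
      unfolding slackL_def a_def using vi w
      by (auto simp: wf_task_def uL_def uH_def intro!: key_ineq)
    then show "(\<Sum>j\<in>{1..<kidx ts a i}. thHj a i j * win a j) +
          Rrate ts a i * (slackL ts a i - (\<Sum>j\<in>{1..<kidx ts a i}. win a j))
          \<ge> CH (ts ! i) - CL (ts ! i) \<and>
          (\<forall>j\<in>{kidx ts a i..nH ts}. thL a i \<le> thHj a i j) \<and> thL a i \<le> thH a i"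
      using vi by (simp add: R aw)
  qed
  have s5: "S5 ts a"
    unfolding S5_def Let_def
  proof
    fix i assume i: "i \<in> THI ts"
    have w: "wf_task (ts ! i)" using wfi[OF i] .
    have iT: "i \<in> Tall ts" using i by (simp add: THI_def Tall_def)
    have vi: "0 < rH i" "rH i \<ge> rL i"
      "uL (ts ! i) / rL i + (uH (ts ! i) - uL (ts ! i)) / rH i \<le> 1" "0 < rL i"
      using v i iT unfolding mcf_valid_def by auto
    have "0 \<le> uL (ts ! i)" using w by (simp add: wf_task_def uL_def)
    hence "uH (ts ! i) \<le> rH i" using vi key_uH by blast
    then show "(\<Sum>j\<in>{1..<kidx ts a i}. thHj a i j * win a j) \<ge> uH (ts ! i) * (\<Sum>j\<in>{1..<kidx ts a i}. win a j) \<and>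
          (\<forall>j\<in>{1..<kidx ts a i}. thHx ts a i j \<le> thHx ts a i (j + 1)) \<and>
          (\<forall>j\<in>{kidx ts a i..nH ts}. thHj a i j \<ge> uH (ts ! i)) \<and> thH a i \<ge> uH (ts ! i)"
      by (simp add: thHx aw)
  qed
  have "dual_rate_form ts a" by (simp add: dual_rate_form_def a_def)
  thus ?thesis using dom s1 s2 s3 s4 s5 unfolding mr_valid_def by blast
qed

lemma wf_task_scale:
  assumes w: "wf_task t" shows "wf_task (t\<lparr>CL := CL t / (4/3), CH := CH t / (4/3)\<rparr>)"
proof -
  have p: "per t > 0" "0 \<le> CL t" "CL t \<le> CH t" "\<not> hi t \<longrightarrow> CH t = CL t"
    "CL t / per t \<le> 1" "CH t / per t \<le> 1"
    using w by (auto simp: wf_task_def uL_def uH_def)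
  have a: "CL t \<le> per t" "CH t \<le> per t" using p(1,5,6) by (simp_all add: divide_le_eq)
  have b: "CL t / (4/3) / per t \<le> 1" "CH t / (4/3) / per t \<le> 1"
    using p(1,2,3) a by (simp_all add: divide_le_eq)
  have c: "0 \<le> CL t / (4/3)" "CL t / (4/3) \<le> CH t / (4/3)" using p(2,3) by simp_all
  show ?thesis unfolding wf_task_def uL_def uH_def using p(1,4) b c by simp
qed

lemma wf_scale:
  assumes "wf_taskset ts" shows "wf_taskset (scale (4/3) ts)"
  using assms wf_task_scale unfolding wf_taskset_def scale_def by auto

theorem lemma3:
  fixes A :: mr_algorithm
    and MCF :: fluid_algorithm
    and Feas :: "taskset \<Rightarrow> nat \<Rightarrow> bool"
  assumes A_opt: "\<And>ts m. wf_taskset ts \<Longrightarrow>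
                    (\<exists>a. dual_rate_form ts a \<and> mr_valid ts m a) \<Longrightarrow> mr_sched A ts m"
    and MCF_speedup: "speedup_bound Feas (mcf_sched MCF) (4/3)"
  shows "(\<forall>ts m. wf_taskset ts \<longrightarrow> mcf_sched MCF ts m \<longrightarrow> mr_sched A ts m)
         \<and> speedup_bound Feas (mr_sched A) (4/3)"
proof -
  have D: "\<forall>ts m. wf_taskset ts \<longrightarrow> mcf_sched MCF ts m \<longrightarrow> mr_sched A ts m"
    using A_opt mcf_to_dual unfolding mcf_sched_def by blast
  moreover have "speedup_bound Feas (mr_sched A) (4/3)"
    unfolding speedup_bound_def
  proof (intro allI impI)
    fix ts m assume "wf_taskset ts" "Feas ts m"
    hence "mcf_sched MCF (scale (4/3) ts) m" using MCF_speedup unfolding speedup_bound_def by blast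
    thus "mr_sched A (scale (4/3) ts) m" using D wf_scale \<open>wf_taskset ts\<close> by blast
  qed
  ultimately show ?thesis by blast
qed

end
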